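(* Let $\mathbf{X}=[\mathbf{x}_1,\ldots,\mathbf{x}_n]\in\mathbb{R}^{d\times n}$ have nonzero columns, let $m$ be an integer with $2\le m<d$, and let $0<\alpha<1$. Let the random sampling matrices $\mathbf{S}_i$ and the estimator $\mathbf{C}_e=\widehat{\mathbf{C}}_1-\widehat{\mathbf{C}}_2$ be constructed by the DACE procedure described in the context, i.e. $m$ entries are sampled from each $\mathbf{x}_i$ with replacement according to the probabilities $p_{ki}=\alpha\frac{|x_{ki}|}{\|\mathbf{x}_i\|_1}+(1-\alpha)\frac{x_{ki}^2}{\|\mathbf{x}_i\|_2^2}$. Then $\mathbf{C}_e$ is an unbiased estimator of $\mathbf{C}=\frac{1}{n}\sum_{i=1}^n\mathbf{x}_i\mathbf{x}_i^T=\frac1n\mathbf{X}\mathbf{X}^T$, i.e. $\mathbb{E}[\mathbf{C}_e]=\mathbf{C}$.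
   Context: DACE construction. Given $\mathbf{X}=[\mathbf{x}_1,\ldots,\mathbf{x}_n]\in\mathbb{R}^{d\times n}$ with $\mathbf{x}_i=(x_{1i},\ldots,x_{di})^T$, an integer $m$ with $2\le m<d$ and $\alpha\in(0,1)$, set for $k\in[d]=\{1,\dots,d\}$ and $i\in[n]$: $p_{ki}=\alpha\frac{|x_{ki}|}{\|\mathbf{x}_i\|_1}+(1-\alpha)\frac{x_{ki}^2}{\|\mathbf{x}_i\|_2^2}$ (a probability distribution on $[d]$ for each $i$). For every $i$ and $j\in[m]$, draw indices $t_{ji}\in[d]$ independently (over all $i,j$) with $\mathbb{P}(t_{ji}=k)=p_{ki}$. Let $\mathbf{e}_1,\ldots,\mathbf{e}_d$ be the standard basis of $\mathbb{R}^d$ and let $\mathbf{S}_i\in\mathbb{R}^{d\times m}$ be the matrix whose $j$-th column is $\mathbf{e}_{t_{ji}}/\sqrt{m\,p_{t_{ji}i}}$. For a square matrix $\mathbf{A}$, $\mathbb{D}(\mathbf{A})$ is the diagonal matrix with the same main diagonal as $\mathbf{A}$; for a vector $\mathbf{b}$, $\mathbb{D}(\mathbf{b})$ is the diagonal matrix with $\mathbf{b}$ on its diagonal. Let $b_{ki}=\frac{1}{1+(m-1)p_{ki}}$ and $\mathbf{b}_i=(b_{1i},\ldots,b_{di})^T$. Define $\widehat{\mathbf{C}}_1=\frac{m}{nm-n}\sum_{i=1}^n\mathbf{S}_i\mathbf{S}_i^T\mathbf{x}_i\mathbf{x}_i^T\mathbf{S}_i\mathbf{S}_i^T$, $\widehat{\mathbf{C}}_2=\frac{m}{nm-n}\sum_{i=1}^n\mathbb{D}(\mathbf{S}_i\mathbf{S}_i^T\mathbf{x}_i\mathbf{x}_i^T\mathbf{S}_i\mathbf{S}_i^T)\mathbb{D}(\mathbf{b}_i)$,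 and $\mathbf{C}_e=\widehat{\mathbf{C}}_1-\widehat{\mathbf{C}}_2$. *)

theory Defs
  imports Complex_Main "HOL-Library.FuncSet"
begin

text \<open>Conventions: 0-based indices. Rows k < d, columns i < n, samples j < m.
  A d x n data matrix is X :: nat => nat => real with X k i = x_{ki}.
  Matrices are functions nat => nat => real; dimensions are passed explicitly.\<close>

definition norm1_col :: "nat \<Rightarrow> (nat \<Rightarrow> nat \<Rightarrow> real) \<Rightarrow> nat \<Rightarrow> real" where
  "norm1_col d X i = (\<Sum>k<d. \<bar>X k i\<bar>)"

definition norm2sq_col :: "nat \<Rightarrow> (nat \<Rightarrow> nat \<Rightarrow> real) \<Rightarrow> nat \<Rightarrow> real" where
  "norm2sq_col d X i = (\<Sum>k<d. (X k i)^2)"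

definition dace_p :: "real \<Rightarrow> nat \<Rightarrow> (nat \<Rightarrow> nat \<Rightarrow> real) \<Rightarrow> nat \<Rightarrow> nat \<Rightarrow> real" where
  "dace_p \<alpha> d X k i = \<alpha> * \<bar>X k i\<bar> / norm1_col d X i + (1 - \<alpha>) * (X k i)^2 / norm2sq_col d X i"

definition mmul :: "nat \<Rightarrow> (nat \<Rightarrow> nat \<Rightarrow> real) \<Rightarrow> (nat \<Rightarrow> nat \<Rightarrow> real) \<Rightarrow> nat \<Rightarrow> nat \<Rightarrow> real" where
  "mmul r A B a b = (\<Sum>s<r. A a s * B s b)"

definition mtrans :: "(nat \<Rightarrow> nat \<Rightarrow> real) \<Rightarrow> nat \<Rightarrow> nat \<Rightarrow> real" where
  "mtrans A a b = A b a"

definition diag_of_mat :: "(nat \<Rightarrow> nat \<Rightarrow> real) \<Rightarrow> nat \<Rightarrow> nat \<Rightarrow> real" where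
  "diag_of_mat A k l = (if k = l then A k k else 0)"

definition diag_of_vec :: "(nat \<Rightarrow> real) \<Rightarrow> nat \<Rightarrow> nat \<Rightarrow> real" where
  "diag_of_vec v k l = (if k = l then v k else 0)"

definition col_mat :: "(nat \<Rightarrow> nat \<Rightarrow> real) \<Rightarrow> nat \<Rightarrow> nat \<Rightarrow> nat \<Rightarrow> real" where
  "col_mat X i k c = X k i"

text \<open>Sampling matrix S_i (d x m) for sampled indices t (t (j,i) = t_{ji}):
  column j is e_{t_{ji}} / sqrt(m p_{t_{ji} i}).\<close>
definition dace_S :: "real \<Rightarrow> nat \<Rightarrow> nat \<Rightarrow> (nat \<Rightarrow> nat \<Rightarrow> real) \<Rightarrow> (nat \<times> nat \<Rightarrow> nat) \<Rightarrow> nat \<Rightarrow> nat \<Rightarrow> nat \<Rightarrow> real" where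
  "dace_S \<alpha> d m X t i k j =
     (if t (j, i) = k then 1 / sqrt (real m * dace_p \<alpha> d X (t (j, i)) i) else 0)"

definition dace_M :: "real \<Rightarrow> nat \<Rightarrow> nat \<Rightarrow> (nat \<Rightarrow> nat \<Rightarrow> real) \<Rightarrow> (nat \<times> nat \<Rightarrow> nat) \<Rightarrow> nat \<Rightarrow> nat \<Rightarrow> nat \<Rightarrow> real" where
  "dace_M \<alpha> d m X t i =
     (let S = dace_S \<alpha> d m X t i;
          SSt = mmul m S (mtrans S);
          xxt = mmul 1 (col_mat X i) (mtrans (col_mat X i))
      in mmul d (mmul d SSt xxt) SSt)"

definition dace_b :: "real \<Rightarrow> nat \<Rightarrow> nat \<Rightarrow> (nat \<Rightarrow> nat \<Rightarrow> real) \<Rightarrow> nat \<Rightarrow> nat \<Rightarrow> real" where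
  "dace_b \<alpha> d m X i k = 1 / (1 + (real m - 1) * dace_p \<alpha> d X k i)"

definition dace_C1 where
  "dace_C1 \<alpha> d m n X t k l =
     real m / (real n * real m - real n) * (\<Sum>i<n. dace_M \<alpha> d m X t i k l)"

definition dace_C2 where
  "dace_C2 \<alpha> d m n X t k l =
     real m / (real n * real m - real n) *
       (\<Sum>i<n. mmul d (diag_of_mat (dace_M \<alpha> d m X t i)) (diag_of_vec (dace_b \<alpha> d m X i)) k l)"

definition dace_Ce where
  "dace_Ce \<alpha> d m n X t k l = dace_C1 \<alpha> d m n X t k l - dace_C2 \<alpha> d m n X t k l"

text \<open>Sample space of all index draws t_{ji} in [d], j < m, i < n, and the probability
  of a draw under independent sampling with P(t_{ji} = k) = p_{ki}.\<close>
definition dace_space :: "nat \<Rightarrow> nat \<Rightarrow> nat \<Rightarrow> (nat \<times> nat \<Rightarrow> nat) set" where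
  "dace_space d m n = ({..<m} \<times> {..<n}) \<rightarrow>\<^sub>E {..<d}"

definition dace_prob where
  "dace_prob \<alpha> d m n X t = (\<Prod>(j, i) \<in> {..<m} \<times> {..<n}. dace_p \<alpha> d X (t (j, i)) i)"

definition dace_E where
  "dace_E \<alpha> d m n X F k l = (\<Sum>t \<in> dace_space d m n. dace_prob \<alpha> d m n X t * F t k l)"

end

theory Submission
  imports Defs
begin

lemma prod_ind:
  assumes "finite I" "x0 \<in> I"
  shows "(\<Prod>x\<in>I. if x = x0 \<and> t x \<noteq> a then 0 else (1::real)) = (if t x0 = a then 1 else 0)"
proof (cases "t x0 = a")
  case True
  then show ?thesis by (intro trans[OF prod.neutral]) auto
next
  case False
  then show ?thesis using assms by (auto simp: prod_zero_iff)
qed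

lemma E_ind2:
  fixes q :: "'a \<Rightarrow> nat \<Rightarrow> real"
  assumes fin: "finite I" and x0: "x0 \<in> I" and x1: "x1 \<in> I" and ab: "a < d" "b < d"
    and q1: "\<And>x. x \<in> I \<Longrightarrow> (\<Sum>c<d. q x c) = 1"
  shows "(\<Sum>t\<in>PiE I (\<lambda>_. {..<d}). (\<Prod>x\<in>I. q x (t x)) * (if t x0 = a \<and> t x1 = b then 1 else 0))
       = (if x0 = x1 then (if a = b then q x0 a else 0) else q x0 a * q x1 b)"
proof -
  define f where "f x c = q x c * ((if x = x0 \<and> c \<noteq> a then 0 else 1) * (if x = x1 \<and> c \<noteq> b then 0 else (1::real)))" for x c
  have L: "(\<Prod>x\<in>I. q x (t x)) * (if t x0 = a \<and> t x1 = b then 1 else 0) = (\<Prod>x\<in>I. f x (t x))" for t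
  proof -
    have "(\<Prod>x\<in>I. f x (t x)) = (\<Prod>x\<in>I. q x (t x)) * ((\<Prod>x\<in>I. if x = x0 \<and> t x \<noteq> a then 0 else 1) * (\<Prod>x\<in>I. if x = x1 \<and> t x \<noteq> b then 0 else 1))"
      unfolding f_def prod.distrib by simp
    also have "\<dots> = (\<Prod>x\<in>I. q x (t x)) * (if t x0 = a \<and> t x1 = b then 1 else 0)"
      using prod_ind[OF fin x0, of t a] prod_ind[OF fin x1, of t b] by simp
    finally show ?thesis by simp
  qed
  have S: "(\<Sum>c<d. f x c) = (if x = x0 \<and> x = x1 then (if a = b then q x a else 0) else if x = x0 then q x a else if x = x1 then q x b else 1)" if "x \<in> I" for x
  proof -
    have fa: "f x c = (if x = x0 \<and> x = x1 then (if a = b \<and> c = a then q x c else 0) else if x = x0 then (if c = a then q x c else 0) else if x = x1 then (if c = b then q x c else 0) else q x c)" for c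
      unfolding f_def by auto
    show ?thesis unfolding fa using ab q1[OF that] by (cases "x = x0"; cases "x = x1"; cases "a = b") auto
  qed
  have "(\<Sum>t\<in>PiE I (\<lambda>_. {..<d}). (\<Prod>x\<in>I. q x (t x)) * (if t x0 = a \<and> t x1 = b then 1 else 0))
      = (\<Prod>x\<in>I. \<Sum>c<d. f x c)"
    unfolding L by (rule prod_sum_PiE[symmetric]) (use fin in auto)
  also have "\<dots> = (\<Prod>x\<in>I. (if x = x0 \<and> x = x1 then (if a = b then q x a else 0) else if x = x0 then q x a else if x = x1 then q x b else 1))"
    using S by (intro prod.cong) auto
  also have "\<dots> = (if x0 = x1 then (if a = b then q x0 a else 0) else q x0 a * q x1 b)"
  proof (cases "x0 = x1")
    case True
    have "(\<Prod>x\<in>I. (if x = x0 \<and> x = x1 then (if a = b then q x a else 0) else if x = x0 then q x a else if x = x1 then q x b else 1))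
       = (\<Prod>x\<in>I. (if x = x0 then (if a = b then q x0 a else 0) else 1))"
      using True by (intro prod.cong) auto
    also have "\<dots> = (if a = b then q x0 a else 0)" using fin x0 by (simp add: prod.delta)
    finally show ?thesis using True by simp
  next
    case False
    have "(\<Prod>x\<in>I. (if x = x0 \<and> x = x1 then (if a = b then q x a else 0) else if x = x0 then q x a else if x = x1 then q x b else 1))
       = (\<Prod>x\<in>I. (if x = x0 then q x0 a else 1) * (if x = x1 then q x1 b else 1))"
      using False by (intro prod.cong) auto
    also have "\<dots> = q x0 a * q x1 b" unfolding prod.distrib using fin x0 x1 by (simp add: prod.delta)
    finally show ?thesis using False by simp
  qed
  finally show ?thesis .
qed


lemma p_nonneg: "0 \<le> \<alpha> \<Longrightarrow> \<alpha> \<le> 1 \<Longrightarrow> 0 \<le> dace_p \<alpha> d X k i"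
  unfolding dace_p_def norm1_col_def norm2sq_col_def
  by (intro add_nonneg_nonneg divide_nonneg_nonneg mult_nonneg_nonneg sum_nonneg) auto

lemma norm2_pos: "k < d \<Longrightarrow> X k i \<noteq> 0 \<Longrightarrow> 0 < norm2sq_col d X i"
proof -
  assume a: "k < d" "X k i \<noteq> 0"
  have "(X k i)^2 \<le> norm2sq_col d X i" unfolding norm2sq_col_def
    by (rule member_le_sum[where f="\<lambda>k. (X k i)^2"]) (use a in auto)
  moreover have "0 < (X k i)^2" using a by simp
  ultimately show ?thesis by linarith
qed

lemma norm1_pos: "k < d \<Longrightarrow> X k i \<noteq> 0 \<Longrightarrow> 0 < norm1_col d X i"
proof -
  assume a: "k < d" "X k i \<noteq> 0"
  have "\<bar>X k i\<bar> \<le> norm1_col d X i" unfolding norm1_col_def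
    by (rule member_le_sum[where f="\<lambda>k. \<bar>X k i\<bar>"]) (use a in auto)
  moreover have "0 < \<bar>X k i\<bar>" using a by simp
  ultimately show ?thesis by linarith
qed

lemma p_pos: "0 \<le> \<alpha> \<Longrightarrow> \<alpha> < 1 \<Longrightarrow> k < d \<Longrightarrow> X k i \<noteq> 0 \<Longrightarrow> 0 < dace_p \<alpha> d X k i"
proof -
  assume a: "0 \<le> \<alpha>" "\<alpha> < 1" "k < d" "X k i \<noteq> 0"
  have "0 < (1 - \<alpha>) * (X k i)^2 / norm2sq_col d X i"
    using a norm2_pos[of k d X i, OF a(3,4)] by simp
  moreover have "0 \<le> \<alpha> * \<bar>X k i\<bar> / norm1_col d X i"
    using a unfolding norm1_col_def by (simp add: sum_nonneg)
  ultimately show ?thesis unfolding dace_p_def by linarith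
qed

lemma p_sum: "k0 < d \<Longrightarrow> X k0 i \<noteq> 0 \<Longrightarrow> (\<Sum>k<d. dace_p \<alpha> d X k i) = 1"
proof -
  assume a: "k0 < d" "X k0 i \<noteq> 0"
  have n1: "norm1_col d X i \<noteq> 0" using norm1_pos[of k0 d X i, OF a] by simp
  have n2: "norm2sq_col d X i \<noteq> 0" using norm2_pos[of k0 d X i, OF a] by simp
  have "(\<Sum>k<d. dace_p \<alpha> d X k i) = \<alpha> * (\<Sum>k<d. \<bar>X k i\<bar>) / norm1_col d X i + (1 - \<alpha>) * (\<Sum>k<d. (X k i)^2) / norm2sq_col d X i"
    unfolding dace_p_def sum.distrib sum_divide_distrib[symmetric] sum_distrib_left by simp
  also have "\<dots> = 1" using n1 n2 unfolding norm1_col_def norm2sq_col_def by (simp add: field_simps)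
  finally show ?thesis .
qed

definition cnt :: "(nat \<times> nat \<Rightarrow> nat) \<Rightarrow> nat \<Rightarrow> nat \<Rightarrow> nat \<Rightarrow> real" where
  "cnt t m i a = (\<Sum>j<m. if t (j, i) = a then 1 else 0)"

lemma SSt: assumes "0 \<le> \<alpha>" "\<alpha> \<le> 1"
  shows "mmul m (dace_S \<alpha> d m X t i) (mtrans (dace_S \<alpha> d m X t i)) a b
     = (if a = b then cnt t m i a / (real m * dace_p \<alpha> d X a i) else 0)"
proof (cases "a = b")
  case True
  have y: "0 \<le> real m * dace_p \<alpha> d X a i" using p_nonneg[OF assms] by simp
  have "1 / sqrt y * (1 / sqrt y) = 1 / y" if "0 \<le> y" for y :: real
    proof -
    have "sqrt y * sqrt y = y" using that real_sqrt_mult_self[of y] by simp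
    have "1 / sqrt y * (1 / sqrt y) = 1 / (sqrt y * sqrt y)" by simp
    then show ?thesis using \<open>sqrt y * sqrt y = y\<close> by simp
  qed
  then have "(if t (s, i) = a then 1 / sqrt (real m * dace_p \<alpha> d X (t (s, i)) i) else 0) *
        (if t (s, i) = a then 1 / sqrt (real m * dace_p \<alpha> d X (t (s, i)) i) else 0)
       = (if t (s, i) = a then 1 else 0) / (real m * dace_p \<alpha> d X a i)" for s
    using y by auto
  then show ?thesis using True
    unfolding mmul_def mtrans_def dace_S_def cnt_def sum_divide_distrib by simp
next
  case False
  then show ?thesis unfolding mmul_def mtrans_def dace_S_def by (auto intro!: sum.neutral)
qed

lemma M_eq: assumes "0 \<le> \<alpha>" "\<alpha> \<le> 1" "k < d" "l < d"
  shows "dace_M \<alpha> d m X t i k l = X k i * X l i * (cnt t m i k * cnt t m i l) / (real m * dace_p \<alpha> d X k i * (real m * dace_p \<alpha> d X l i))"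
proof -
  have "dace_M \<alpha> d m X t i k l = (\<Sum>s<d. (\<Sum>r<d. (if k = r then cnt t m i k / (real m * dace_p \<alpha> d X k i) else 0) * (X r i * X s i))
        * (if s = l then cnt t m i s / (real m * dace_p \<alpha> d X s i) else 0))"
    unfolding dace_M_def Let_def SSt[OF assms(1,2)] by (simp add: mmul_def col_mat_def mtrans_def)
  also have "\<dots> = (\<Sum>s<d. (cnt t m i k / (real m * dace_p \<alpha> d X k i) * (X k i * X s i))
        * (if s = l then cnt t m i s / (real m * dace_p \<alpha> d X s i) else 0))"
    using assms by (simp add: if_distrib if_distribR sum.delta cong: if_cong)
  also have "\<dots> = X k i * X l i * (cnt t m i k * cnt t m i l) / (real m * dace_p \<alpha> d X k i * (real m * dace_p \<alpha> d X l i))"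
    using assms by (simp add: if_distrib if_distribR sum.delta' cong: if_cong)
  finally show ?thesis .
qed


lemma prob_eq: "dace_prob \<alpha> d m n X t = (\<Prod>x\<in>{..<m} \<times> {..<n}. dace_p \<alpha> d X (t x) (snd x))"
  unfolding dace_prob_def by (intro prod.cong) auto

lemma E_ind:
  assumes nz: "\<forall>i<n. \<exists>k<d. X k i \<noteq> 0" and "j < m" "j' < m" "i < n" "k < d" "l < d"
  shows "(\<Sum>t\<in>dace_space d m n. dace_prob \<alpha> d m n X t * (if t (j, i) = k \<and> t (j', i) = l then 1 else 0))
     = (if j = j' then (if k = l then dace_p \<alpha> d X k i else 0) else dace_p \<alpha> d X k i * dace_p \<alpha> d X l i)"
proof -
  have q1: "(\<Sum>c<d. dace_p \<alpha> d X c (snd x)) = 1" if "x \<in> {..<m} \<times> {..<n}" for x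
  proof -
    from that nz obtain k0 where "k0 < d" "X k0 (snd x) \<noteq> 0" by auto
    then show ?thesis by (rule p_sum)
  qed
  have "(\<Sum>t\<in>dace_space d m n. dace_prob \<alpha> d m n X t * (if t (j, i) = k \<and> t (j', i) = l then 1 else 0))
    = (if (j, i) = (j', i) then (if k = l then dace_p \<alpha> d X k (snd (j, i)) else 0) else dace_p \<alpha> d X k (snd (j, i)) * dace_p \<alpha> d X l (snd (j', i)))"
    unfolding prob_eq dace_space_def
    by (rule E_ind2[where q="\<lambda>x c. dace_p \<alpha> d X c (snd x)"]) (use assms q1 in auto)
  then show ?thesis by simp
qed

lemma dsum: "(\<Sum>j<m. \<Sum>j'<m. if j = j' then A else B) = real m * A + real m * (real m - 1) * (B::real)"
proof -
  have "(\<Sum>j'<m. if j = j' then A else B) = real m * B + (A - B)" if "j < m" for j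
  proof -
    have "(\<Sum>j'<m. if j = j' then A else B) = (\<Sum>j'<m. B + (if j = j' then A - B else 0))"
      by (intro sum.cong) auto
    also have "\<dots> = real m * B + (A - B)" using that by (simp add: sum.distrib)
    finally show ?thesis .
  qed
  then have "(\<Sum>j<m. \<Sum>j'<m. if j = j' then A else B) = (\<Sum>j<m. real m * B + (A - B))" by simp
  also have "\<dots> = real m * A + real m * (real m - 1) * B" by (simp add: algebra_simps)
  finally show ?thesis .
qed

lemma EM:
  assumes nz: "\<forall>i<n. \<exists>k<d. X k i \<noteq> 0" and a: "0 \<le> \<alpha>" "\<alpha> \<le> 1" and "i < n" "k < d" "l < d"
  shows "(\<Sum>t\<in>dace_space d m n. dace_prob \<alpha> d m n X t * dace_M \<alpha> d m X t i k l)
   = X k i * X l i / (real m * dace_p \<alpha> d X k i * (real m * dace_p \<alpha> d X l i)) *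
     (real m * (if k = l then dace_p \<alpha> d X k i else 0) + real m * (real m - 1) * (dace_p \<alpha> d X k i * dace_p \<alpha> d X l i))"
proof -
  define C where "C = X k i * X l i / (real m * dace_p \<alpha> d X k i * (real m * dace_p \<alpha> d X l i))"
  have M: "dace_M \<alpha> d m X t i k l = C * (\<Sum>j<m. \<Sum>j'<m. if t (j, i) = k \<and> t (j', i) = l then 1 else 0)" for t
  proof -
    have "cnt t m i k * cnt t m i l = (\<Sum>j<m. \<Sum>j'<m. if t (j, i) = k \<and> t (j', i) = l then 1 else 0)"
      unfolding cnt_def sum_product by (intro sum.cong) auto
    then show ?thesis unfolding M_eq[OF a assms(5,6)] C_def by simp
  qed
  have "(\<Sum>t\<in>dace_space d m n. dace_prob \<alpha> d m n X t * dace_M \<alpha> d m X t i k l)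
     = C * (\<Sum>t\<in>dace_space d m n. \<Sum>j<m. \<Sum>j'<m. dace_prob \<alpha> d m n X t * (if t (j, i) = k \<and> t (j', i) = l then 1 else 0))"
    unfolding M sum_distrib_left by (intro sum.cong) (auto simp: algebra_simps)
  also have "\<dots> = C * (\<Sum>j<m. \<Sum>j'<m. \<Sum>t\<in>dace_space d m n. dace_prob \<alpha> d m n X t * (if t (j, i) = k \<and> t (j', i) = l then 1 else 0))"
    by (subst sum.swap, subst (2) sum.swap) (rule refl)
  also have "\<dots> = C * (\<Sum>j<m. \<Sum>j'<m. if j = j' then (if k = l then dace_p \<alpha> d X k i else 0) else dace_p \<alpha> d X k i * dace_p \<alpha> d X l i)"
    using E_ind[OF nz _ _ assms(4,5,6)] by simp
  also have "\<dots> = C * (real m * (if k = l then dace_p \<alpha> d X k i else 0) + real m * (real m - 1) * (dace_p \<alpha> d X k i * dace_p \<alpha> d X l i))"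
    by (simp only: dsum)
  finally show ?thesis unfolding C_def .
qed


lemma mmul_diag: "k < d \<Longrightarrow> l < d \<Longrightarrow> mmul d (diag_of_mat A) (diag_of_vec v) k l = (if k = l then A k k * v k else 0)"
proof -
  assume kl: "k < d" "l < d"
  have e: "diag_of_mat A k s * diag_of_vec v s l = (if s = k then (if k = l then A k k * v k else 0) else 0)" for s
    unfolding diag_of_mat_def diag_of_vec_def by auto
  show ?thesis unfolding mmul_def e using kl by (simp add: sum.delta)
qed

lemma alg:
  fixes P M x :: real
  assumes P: "0 < P" and M: "1 < M"
  shows "x * x / (M * P * (M * P)) * (M * P + M * (M - 1) * (P * P)) -
     x * x / (M * P * (M * P)) * (M * P + M * (M - 1) * (P * P)) * (1 / (1 + (M - 1) * P))
     = (M - 1) / M * (x * x)"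
proof -
  have b: "1 + (M - 1) * P > 0" using P M by (simp add: add_pos_nonneg)
  have g: "x * x / (M * P * (M * P)) * (M * P + M * (M - 1) * (P * P)) = x * x * (1 + (M - 1) * P) / (M * P)"
  proof -
    have e: "M * P + M * (M - 1) * (P * P) = (M * P) * (1 + (M - 1) * P)" by (simp add: algebra_simps)
    have a: "M * P \<noteq> 0" using P M by simp
    show ?thesis unfolding e using a by (simp add: field_simps)
  qed
  define R where "R = 1 + (M - 1) * P"
  have R0: "R \<noteq> 0" using b R_def by simp
  have "x * x * R / (M * P) - x * x * R / (M * P) * (1 / R) = x * x * R / (M * P) - x * x / (M * P)"
    using R0 by simp
  also have "\<dots> = x * x * (R - 1) / (M * P)" by (simp add: diff_divide_distrib right_diff_distrib)
  also have "\<dots> = x * x * ((M - 1) * P) / (M * P)" unfolding R_def by simp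
  also have "\<dots> = (M - 1) / M * (x * x)" using P by simp
  finally show ?thesis unfolding g R_def .
qed

lemma per_i:
  fixes X :: "nat \<Rightarrow> nat \<Rightarrow> real" and i :: nat
  assumes a: "0 \<le> \<alpha>" "\<alpha> < 1" and m: "2 \<le> m" and kl: "k < d" "l < d"
  defines "G \<equiv> \<lambda>k l. X k i * X l i / (real m * dace_p \<alpha> d X k i * (real m * dace_p \<alpha> d X l i)) *
     (real m * (if k = l then dace_p \<alpha> d X k i else 0) + real m * (real m - 1) * (dace_p \<alpha> d X k i * dace_p \<alpha> d X l i))"
  shows "G k l - (if k = l then G k k * dace_b \<alpha> d m X i k else 0) = (real m - 1) / real m * (X k i * X l i)"
proof (cases "X k i = 0 \<or> X l i = 0")
  case True
  then show ?thesis unfolding G_def by auto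
next
  case False
  have pk: "0 < dace_p \<alpha> d X k i" using p_pos[OF a kl(1)] False by auto
  have pl: "0 < dace_p \<alpha> d X l i" using p_pos[OF a kl(2)] False by auto
  have m0: "real m > 1" using m by simp
  show ?thesis
  proof (cases "k = l")
    case True
    have b: "1 + (real m - 1) * dace_p \<alpha> d X k i > 0" using pk m0 by (simp add: add_pos_nonneg)
    have pl': "0 < dace_p \<alpha> d X l i" using pk True by simp
    show ?thesis unfolding True G_def dace_b_def
      by (simp only: simp_thms if_True) (rule alg[OF pl' m0])
  next
    case False
    then show ?thesis using pk pl m0 unfolding G_def by (simp add: field_simps)
  qed
qed

theorem theorem1:
  fixes X :: "nat \<Rightarrow> nat \<Rightarrow> real" and d m n :: nat and \<alpha> :: real
  assumes nonzero_cols: "\<forall>i<n. \<exists>k<d. X k i \<noteq> 0"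
    and m_ge: "2 \<le> m" and m_lt: "m < d"
    and alpha_pos: "0 < \<alpha>" and alpha_lt: "\<alpha> < 1"
  shows "\<forall>k<d. \<forall>l<d.
           dace_E \<alpha> d m n X (dace_Ce \<alpha> d m n X) k l = (1 / real n) * (\<Sum>i<n. X k i * X l i)"
proof (intro allI impI)
  fix k l assume kl: "k < d" "l < d"
  define c where "c = real m / (real n * real m - real n)"
  have a: "0 \<le> \<alpha>" "\<alpha> \<le> 1" "\<alpha> < 1" using alpha_pos alpha_lt by auto
  have Ce: "dace_Ce \<alpha> d m n X t k l = c * (\<Sum>i<n. dace_M \<alpha> d m X t i k l - (if k = l then dace_M \<alpha> d m X t i k k * dace_b \<alpha> d m X i k else 0))" for t
    unfolding dace_Ce_def dace_C1_def dace_C2_def mmul_diag[OF kl] c_def sum_subtractf right_diff_distrib ..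
  have "dace_E \<alpha> d m n X (dace_Ce \<alpha> d m n X) k l
     = c * (\<Sum>i<n. (\<Sum>t\<in>(dace_space d m n). dace_prob \<alpha> d m n X t * dace_M \<alpha> d m X t i k l) - (if k = l then (\<Sum>t\<in>(dace_space d m n). dace_prob \<alpha> d m n X t * dace_M \<alpha> d m X t i k k) * dace_b \<alpha> d m X i k else 0))"
  proof -
    have B: "(\<Sum>t\<in>(dace_space d m n). dace_prob \<alpha> d m n X t * (if k = l then dace_M \<alpha> d m X t i k k * dace_b \<alpha> d m X i k else 0))
       = (if k = l then (\<Sum>t\<in>(dace_space d m n). dace_prob \<alpha> d m n X t * dace_M \<alpha> d m X t i k k) * dace_b \<alpha> d m X i k else 0)" for i
      by (cases "k = l") (simp_all add: sum_distrib_right mult.assoc)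
    have "dace_E \<alpha> d m n X (dace_Ce \<alpha> d m n X) k l
      = (\<Sum>t\<in>(dace_space d m n). c * (\<Sum>i<n. dace_prob \<alpha> d m n X t * dace_M \<alpha> d m X t i k l - dace_prob \<alpha> d m n X t * (if k = l then dace_M \<alpha> d m X t i k k * dace_b \<alpha> d m X i k else 0)))"
      unfolding dace_E_def Ce
      by (intro sum.cong refl) (simp add: sum_distrib_left right_diff_distrib mult.left_commute)
    also have "\<dots> = c * (\<Sum>i<n. \<Sum>t\<in>(dace_space d m n). dace_prob \<alpha> d m n X t * dace_M \<alpha> d m X t i k l - dace_prob \<alpha> d m n X t * (if k = l then dace_M \<alpha> d m X t i k k * dace_b \<alpha> d m X i k else 0))"
      by (simp add: sum_distrib_left[symmetric] sum.swap[of _ "dace_space d m n"])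
    also have "\<dots> = c * (\<Sum>i<n. (\<Sum>t\<in>(dace_space d m n). dace_prob \<alpha> d m n X t * dace_M \<alpha> d m X t i k l) - (if k = l then (\<Sum>t\<in>(dace_space d m n). dace_prob \<alpha> d m n X t * dace_M \<alpha> d m X t i k k) * dace_b \<alpha> d m X i k else 0))"
      by (simp only: sum_subtractf B)
    finally show ?thesis .
  qed
  also have "\<dots> = c * (\<Sum>i<n. (real m - 1) / real m * (X k i * X l i))"
  proof -
    have "(\<Sum>t\<in>dace_space d m n. dace_prob \<alpha> d m n X t * dace_M \<alpha> d m X t i k l) -
            (if k = l then (\<Sum>t\<in>dace_space d m n. dace_prob \<alpha> d m n X t * dace_M \<alpha> d m X t i k k) * dace_b \<alpha> d m X i k else 0)
          = (real m - 1) / real m * (X k i * X l i)" if i: "i \<in> {..<n}" for i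
    proof -
      have i': "i < n" using i by simp
      show ?thesis unfolding EM[OF nonzero_cols a(1,2) i' kl] EM[OF nonzero_cols a(1,2) i' kl(1) kl(1)]
        by (rule per_i[OF a(1,3) m_ge kl])
    qed
    then show ?thesis by (simp)
  qed
  also have "\<dots> = (1 / real n) * (\<Sum>i<n. X k i * X l i)"
  proof -
    have s: "c * (\<Sum>i<n. (real m - 1) / real m * (X k i * X l i)) = (c * ((real m - 1) / real m)) * (\<Sum>i<n. X k i * X l i)"
      by (simp add: sum_distrib_left mult.assoc)
    have "c * ((real m - 1) / real m) = 1 / real n"
    proof (cases "n = 0")
      case True then show ?thesis unfolding c_def by simp
    next
      case False
      have e: "real n * real m - real n = real n * (real m - 1)" by (simp add: algebra_simps)
      have "real m - 1 \<noteq> 0" "real m \<noteq> 0" using m_ge by auto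
      then show ?thesis unfolding c_def e using False by (simp add: divide_simps)
    qed
    then show ?thesis unfolding s by simp
  qed
  finally show "dace_E \<alpha> d m n X (dace_Ce \<alpha> d m n X) k l = (1 / real n) * (\<Sum>i<n. X k i * X l i)" .
qed

end
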